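(* Let $n$ be a positive integer, $0<r\le\sqrt n$, and let $M$ be the number of edges of $G\in\mathcal G(n,r)$. Then $$\mathbb E[M]=\tfrac12(n-1)\pi r^2\Big(1-\tfrac{8}{3\pi}\tfrac{r}{\sqrt n}+\tfrac{1}{2\pi}\tfrac{r^2}{n}\Big)$$ and $$\mathrm{Var}(M)<\tfrac12\pi n r^2+4\pi^2\sqrt n\, r^5.$$
   Context: $\mathcal S_n=[-\sqrt n/2,\sqrt n/2]^2$, $V=[n]$, and $\mathbf X_1,\dots,\mathbf X_n$ are independent uniform points in $\mathcal S_n$. The random geometric graph $G\in\mathcal G(n,r)$ has vertex set $V$, with distinct $u,v$ adjacent iff $\|\mathbf X_u-\mathbf X_v\|_2\le r$. *)

theory Defs
  imports "HOL-Probability.Probability"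
begin

text \<open>The square S_n = [-sqrt n/2, sqrt n/2]^2 in the Euclidean plane (real \<times> real,
  whose norm is the Euclidean norm).\<close>
definition square :: "nat \<Rightarrow> (real \<times> real) set" where
  "square n = {- sqrt (real n) / 2 .. sqrt (real n) / 2} \<times> {- sqrt (real n) / 2 .. sqrt (real n) / 2}"

definition rgg_space :: "nat \<Rightarrow> (nat \<Rightarrow> real \<times> real) measure" where
  "rgg_space n = PiM {..<n} (\<lambda>_. uniform_measure lborel (square n))"

definition num_edges :: "nat \<Rightarrow> real \<Rightarrow> (nat \<Rightarrow> real \<times> real) \<Rightarrow> real" where
  "num_edges n r X = real (card {(u, v). u < v \<and> v < n \<and> dist (X u) (X v) \<le> r})"

end

theory Submission
  imports Defs "HOL-Analysis.Analysis"
begin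


lemma arcs_deriv:
  fixes r L t :: real
  assumes r: "0 < r" and t: "0 < t" "t < r"
  shows "((\<lambda>t. (L^2/2)*(t * sqrt(r^2-t^2) + r^2*arcsin(t/r)) + (L/3)*((r^2-t^2) * sqrt(r^2-t^2))
        + (- (L/2)*(r^2*t - t^3/3) + (r^2*t^2/2 - t^4/4)/2))
     has_real_derivative ((L - t)*(L * sqrt(r^2-t^2) - (r^2-t^2)/2))) (at t)"
proof -
  have h: "0 < r^2 - t^2" using t r by (simp add: power_strict_mono)
  have q1: "-1 < t/r" "t/r < 1" using t r by (auto simp: field_simps)
  define s where "s = sqrt (r^2-t^2)"
  have hs: "s > 0" using h by (simp add: s_def)
  have s2: "s^2 = r^2 - t^2" using h by (simp add: s_def)
  have sq: "sqrt (1 - (t/r)^2) = s / r"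
  proof -
    have "1 - (t/r)^2 = (r^2-t^2)/r^2" using r by (simp add: field_simps power2_eq_square)
    then show ?thesis using r by (simp add: real_sqrt_divide s_def)
  qed
  have d0: "((\<lambda>t. r^2-t^2) has_real_derivative (-2*t)) (at t)"
    by (auto intro!: derivative_eq_intros)
  have ds: "((\<lambda>t. sqrt(r^2-t^2)) has_real_derivative (inverse s / 2) * (-2*t)) (at t)"
    using DERIV_chain2[OF DERIV_real_sqrt[OF h] d0] by (simp add: s_def)
  have da: "((\<lambda>t. arcsin (t/r)) has_real_derivative inverse (sqrt (1 - (t/r)^2)) * (1/r)) (at t)"
    using DERIV_chain2[OF DERIV_arcsin[OF q1] DERIV_cdivide[OF DERIV_ident, of r]] by simp
  have p4: "((\<lambda>t. - (L/2)*(r^2*t - t^3/3) + (r^2*t^2/2 - t^4/4)/2) has_real_derivative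
      (- (L/2)*(r^2 - t^2) + (r^2*t - t^3)/2)) (at t)"
    by (auto intro!: derivative_eq_intros simp: field_simps power2_eq_square power3_eq_cube)
  note all = DERIV_add[OF DERIV_add[OF DERIV_cmult[OF DERIV_add[OF DERIV_mult[OF DERIV_ident ds] DERIV_cmult[OF da, of "r^2"]], of "L^2/2"]
      DERIV_cmult[OF DERIV_mult[OF d0 ds], of "L/3"]] p4]
  show ?thesis
  proof (rule DERIV_cong[OF all])
    have "s * s = r^2 - t^2" using s2 by (simp add: power2_eq_square)
    then show "L\<^sup>2 / 2 * (1 * sqrt (r\<^sup>2 - t\<^sup>2) + inverse s / 2 * (- 2 * t) * t + r\<^sup>2 * (inverse (sqrt (1 - (t / r)\<^sup>2)) * (1 / r))) +
    L / 3 * (- 2 * t * sqrt (r\<^sup>2 - t\<^sup>2) + inverse s / 2 * (- 2 * t) * (r\<^sup>2 - t\<^sup>2)) +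
    (- (L / 2) * (r\<^sup>2 - t\<^sup>2) + (r\<^sup>2 * t - t ^ 3) / 2) =
    (L - t) * (L * sqrt (r\<^sup>2 - t\<^sup>2) - (r\<^sup>2 - t\<^sup>2) / 2)"
      unfolding sq s_def[symmetric] using hs r
      by (simp add: field_simps power2_eq_square power3_eq_cube) algebra
  qed
qed
lemma outer_int:
  fixes r L :: real
  assumes r: "0 < r" and rL: "r \<le> L"
  shows "(\<integral>\<^sup>+t. ennreal ((L - t)*(L * sqrt(r^2-t^2) - (r^2-t^2)/2)) * indicator {0..r} t \<partial>lborel)
     = ennreal (L^2*pi*r^2/4 - 2*L*r^3/3 + r^4/8)"
proof -
  define F where "F = (\<lambda>t::real. (L^2/2)*(t * sqrt(r^2-t^2) + r^2*arcsin(t/r)) + (L/3)*((r^2-t^2) * sqrt(r^2-t^2))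
        + (- (L/2)*(r^2*t - t^3/3) + (r^2*t^2/2 - t^4/4)/2))"
  have cont: "continuous_on {0..r} F"
    unfolding F_def using r
    by (intro continuous_intros) (auto simp: field_simps)
  have der: "(F has_vector_derivative ((L - t)*(L * sqrt(r^2-t^2) - (r^2-t^2)/2))) (at t)" if "t \<in> {0<..<r}" for t
    using arcs_deriv[of r t L] that r unfolding F_def
    by (simp add: has_real_derivative_iff_has_vector_derivative)
  have hi: "((\<lambda>t. (L - t)*(L * sqrt(r^2-t^2) - (r^2-t^2)/2)) has_integral (F r - F 0)) {0..r}"
    using fundamental_theorem_of_calculus_interior[OF _ cont der] r by simp
  have nn: "0 \<le> (L - t)*(L * sqrt(r^2-t^2) - (r^2-t^2)/2)" if "t \<in> {0..r}" for t
  proof -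
    have u: "0 \<le> r^2-t^2" using that r by (simp add: power_mono)
    have "sqrt (r^2-t^2) \<le> r" using that r by (simp add: real_sqrt_le_iff')
    then have "sqrt (r^2-t^2) * sqrt (r^2-t^2) \<le> L * sqrt (r^2-t^2)"
      using rL u by (intro mult_right_mono) auto
    then have "r^2-t^2 \<le> L * sqrt (r^2-t^2)" using u by simp
    moreover have "0 \<le> L - t" using that rL by simp
    ultimately show ?thesis using u by (intro mult_nonneg_nonneg) auto
  qed
  have "F r - F 0 = L^2*pi*r^2/4 - 2*L*r^3/3 + r^4/8"
    unfolding F_def using r by (simp add: field_simps power2_eq_square power3_eq_cube real_sqrt_mult power4_eq_xxxx)
  then show ?thesis using nn_integral_has_integral_lebesgue'[OF nn hi] by simp
qed

lemma even_nn:
  fixes g :: "real \<Rightarrow> ennreal"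
  assumes [measurable]: "g \<in> borel_measurable borel" and ev: "\<And>x. g (-x) = g x"
  shows "(\<integral>\<^sup>+x. g x \<partial>lborel) = 2 * (\<integral>\<^sup>+x. g x * indicator {0..} x \<partial>lborel)"
proof -
  have "(\<integral>\<^sup>+x. g x \<partial>lborel) = (\<integral>\<^sup>+x. g x * indicator {..<0} x + g x * indicator {0..} x \<partial>lborel)"
    by (intro nn_integral_cong) (auto simp: indicator_def)
  also have "\<dots> = (\<integral>\<^sup>+x. g x * indicator {..<0} x \<partial>lborel) + (\<integral>\<^sup>+x. g x * indicator {0..} x \<partial>lborel)"
    by (intro nn_integral_add) auto
  also have "(\<integral>\<^sup>+x. g x * indicator {..<0} x \<partial>lborel) = (\<integral>\<^sup>+x. g (0 + (-1) * x) * indicator {..<0} (0 + (-1) * x) \<partial>lborel)"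
    using nn_integral_real_affine[of "\<lambda>x. g x * indicator {..<0} x" "-1" 0] by simp
  also have "\<dots> = (\<integral>\<^sup>+x. g x * indicator {0..} x \<partial>lborel)"
    by (intro nn_integral_cong_AE, use AE_lborel_singleton[of 0] in eventually_elim) (auto simp: ev indicator_def)
  finally show ?thesis by (simp add: mult_2)
qed

lemma lborel_iter:
  fixes f :: "real \<times> real \<Rightarrow> ennreal"
  assumes "f \<in> borel_measurable borel"
  shows "(\<integral>\<^sup>+t. f t \<partial>lborel) = (\<integral>\<^sup>+x. \<integral>\<^sup>+y. f (x, y) \<partial>lborel \<partial>lborel)"
proof -
  have "f \<in> borel_measurable (lborel \<Otimes>\<^sub>M lborel)" using assms
    by (simp add: lborel_prod)
  then show ?thesis using lborel.nn_integral_fst[of f lborel] lborel_prod[where 'a=real and 'b=real] by simp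
qed

lemma inner_int:
  fixes L a b :: real
  assumes "0 \<le> b" "b \<le> L" "0 \<le> a"
  shows "(\<integral>\<^sup>+t. ennreal (a * (L - t)) * indicator {0..b} t \<partial>lborel) = ennreal (a * (L*b - b^2/2))"
proof -
  have der: "((\<lambda>t. a * (L*t - t^2/2)) has_vector_derivative (a * (L - t))) (at t)" for t
    unfolding has_real_derivative_iff_has_vector_derivative[symmetric]
    by (auto intro!: derivative_eq_intros simp: algebra_simps)
  have hi: "((\<lambda>t. a * (L - t)) has_integral (a * (L*b - b^2/2) - a * (L*0 - 0^2/2))) {0..b}"
    by (rule fundamental_theorem_of_calculus_interior[OF assms(1)]) (auto intro!: continuous_intros der)
  have nn: "0 \<le> a * (L - t)" if "t \<in> {0..b}" for t using that assms by auto
  show ?thesis using nn_integral_has_integral_lebesgue'[OF nn hi] by simp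
qed

lemma psi:
  fixes r L :: real
  assumes r: "0 < r" and rL: "r \<le> L"
  shows "(\<integral>\<^sup>+t. indicator (cball 0 r) t * ennreal ((L - \<bar>fst t\<bar>)*(L - \<bar>snd t\<bar>)) \<partial>lborel)
     = ennreal (pi*L^2*r^2 - 8*L*r^3/3 + r^4/2)"
proof -
  have m2: "(\<lambda>t::real\<times>real. ennreal ((L - \<bar>fst t\<bar>)*(L - \<bar>snd t\<bar>))) \<in> borel_measurable borel"
    by (intro measurable_compose[OF _ measurable_ennreal] borel_measurable_continuous_onI continuous_intros)
  define Q where "Q = (\<lambda>x::real. ennreal ((L - \<bar>x\<bar>)*(L * sqrt(r^2-x^2) - (r^2-x^2)/2)) * indicator {-r..r} x)"
  have mc[measurable]: "cball 0 r \<in> sets (borel :: (real\<times>real) measure)" by simp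
  have cb: "(norm (x,y) \<le> r) \<longleftrightarrow> x^2 + y^2 \<le> r^2" for x y :: real
    using r by (simp add: norm_Pair real_sqrt_le_iff')
  have mQ: "Q \<in> borel_measurable borel" unfolding Q_def
    by (intro borel_measurable_times_ennreal borel_measurable_indicator measurable_compose[OF _ measurable_ennreal] borel_measurable_continuous_onI continuous_intros) auto
  have inner: "(\<integral>\<^sup>+y. indicator (cball 0 r) (x,y) * ennreal ((L - \<bar>x\<bar>)*(L - \<bar>y\<bar>)) \<partial>lborel) = 2 * Q x" for x
  proof -
    have "(\<integral>\<^sup>+y. indicator (cball 0 r) (x,y) * ennreal ((L - \<bar>x\<bar>)*(L - \<bar>y\<bar>)) \<partial>lborel)
        = 2 * (\<integral>\<^sup>+y. indicator (cball 0 r) (x,y) * ennreal ((L - \<bar>x\<bar>)*(L - \<bar>y\<bar>)) * indicator {0..} y \<partial>lborel)"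
      by (subst even_nn) (auto simp: cb indicator_def norm_Pair)
    also have "(\<integral>\<^sup>+y. indicator (cball 0 r) (x,y) * ennreal ((L - \<bar>x\<bar>)*(L - \<bar>y\<bar>)) * indicator {0..} y \<partial>lborel) = Q x"
    proof (cases "\<bar>x\<bar> \<le> r")
      case True
      have x2: "x^2 \<le> r^2" using True r by (metis abs_le_square_iff abs_of_pos)
      define h where "h = sqrt (r^2 - x^2)"
      have "r^2 \<le> L^2" using rL r by (simp add: power_mono)
      then have rl2: "r^2 - x^2 \<le> L^2" using zero_le_power2[of x] by linarith
      have h0: "0 \<le> h" "h \<le> L" using x2 rL r rl2 by (auto simp: h_def real_sqrt_le_iff')
      have hh: "h^2 = r^2 - x^2" using x2 by (simp add: h_def)
      have "(\<integral>\<^sup>+y. indicator (cball 0 r) (x,y) * ennreal ((L - \<bar>x\<bar>)*(L - \<bar>y\<bar>)) * indicator {0..} y \<partial>lborel)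
          = (\<integral>\<^sup>+y. ennreal ((L - \<bar>x\<bar>)*(L - y)) * indicator {0..h} y \<partial>lborel)"
      proof (rule nn_integral_cong)
        fix y :: real
        have "(0 \<le> y \<and> x^2+y^2 \<le> r^2) \<longleftrightarrow> (0 \<le> y \<and> y \<le> h)"
        proof
          assume a: "0 \<le> y \<and> x^2+y^2 \<le> r^2"
          then show "0 \<le> y \<and> y \<le> h" unfolding h_def by (auto intro!: real_le_rsqrt)
        next
          assume a: "0 \<le> y \<and> y \<le> h"
          then have "y^2 \<le> h^2" by (auto intro!: power_mono)
          then show "0 \<le> y \<and> x^2+y^2 \<le> r^2" using a hh by simp
        qed
        then show "indicator (cball 0 r) (x,y) * ennreal ((L - \<bar>x\<bar>)*(L - \<bar>y\<bar>)) * indicator {0..} y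
           = ennreal ((L - \<bar>x\<bar>)*(L - y)) * indicator {0..h} y"
          by (auto simp: indicator_def cb)
      qed
      also have "\<dots> = ennreal ((L - \<bar>x\<bar>)*(L*h - h^2/2))"
        using True rL h0 by (intro inner_int) auto
      finally show ?thesis using True unfolding Q_def hh by (simp add: h_def indicator_def abs_le_iff)
    next
      case False
      then have "x^2 > r^2" using r by (metis abs_le_square_iff abs_of_pos not_le)
      then have z: "indicator (cball 0 r) (x,y) * ennreal ((L - \<bar>x\<bar>)*(L - \<bar>y\<bar>)) * indicator {0..} y = (0::ennreal)" for y
        by (auto simp: cb indicator_def) (use zero_le_power2[of y] in linarith)
      have "(\<integral>\<^sup>+y. indicator (cball 0 r) (x,y) * ennreal ((L - \<bar>x\<bar>)*(L - \<bar>y\<bar>)) * indicator {0..} y \<partial>lborel)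
          = 0" by (simp only: z) simp
      then show ?thesis using False by (auto simp: Q_def indicator_def abs_le_iff)
    qed
    finally show ?thesis .
  qed
  have "(\<integral>\<^sup>+t. indicator (cball 0 r) t * ennreal ((L - \<bar>fst t\<bar>)*(L - \<bar>snd t\<bar>)) \<partial>lborel)
     = (\<integral>\<^sup>+x. 2 * Q x \<partial>lborel)"
    by (subst lborel_iter) (auto simp: inner intro!: borel_measurable_times_ennreal m2)
  also have "\<dots> = 2 * (\<integral>\<^sup>+x. Q x \<partial>lborel)"
    by (rule nn_integral_cmult) (simp add: mQ)
  also have "(\<integral>\<^sup>+x. Q x \<partial>lborel) = 2 * (\<integral>\<^sup>+x. Q x * indicator {0..} x \<partial>lborel)"
    by (rule even_nn[OF mQ]) (auto simp: Q_def indicator_def)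
  also have "(\<integral>\<^sup>+x. Q x * indicator {0..} x \<partial>lborel) = 
      (\<integral>\<^sup>+t. ennreal ((L - t)*(L * sqrt(r^2-t^2) - (r^2-t^2)/2)) * indicator {0..r} t \<partial>lborel)"
    by (intro nn_integral_cong) (auto simp: Q_def indicator_def)
  also have "\<dots> = ennreal (L^2*pi*r^2/4 - 2*L*r^3/3 + r^4/8)"
    by (rule outer_int[OF r rL])
  finally have fin: "(\<integral>\<^sup>+t. indicator (cball 0 r) t * ennreal ((L - \<bar>fst t\<bar>)*(L - \<bar>snd t\<bar>)) \<partial>lborel)
     = 2 * (2 * ennreal (L^2*pi*r^2/4 - 2*L*r^3/3 + r^4/8))" .
  have "(2::ennreal) * (2 * ennreal (L^2*pi*r^2/4 - 2*L*r^3/3 + r^4/8)) = ennreal (4 * (L^2*pi*r^2/4 - 2*L*r^3/3 + r^4/8))"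
    by (subst ennreal_mult') (auto simp: mult.assoc[symmetric])
  also have "4 * (L^2*pi*r^2/4 - 2*L*r^3/3 + r^4/8) = pi*L^2*r^2 - 8*L*r^3/3 + r^4/2"
    by (simp add: algebra_simps)
  finally show ?thesis using fin by simp
qed


lemma overlap1:
  fixes L s :: real
  assumes "\<bar>s\<bar> \<le> L"
  shows "(\<integral>\<^sup>+x. indicator {-L/2..L/2} x * indicator {-L/2..L/2} (x + s) \<partial>lborel) = ennreal (L - \<bar>s\<bar>)"
proof -
  have "(\<integral>\<^sup>+x. indicator {-L/2..L/2} x * indicator {-L/2..L/2} (x + s) \<partial>lborel)
      = (\<integral>\<^sup>+x. indicator {max (-L/2) (-L/2-s) .. min (L/2) (L/2-s)} x \<partial>lborel)"
    by (intro nn_integral_cong) (auto simp: indicator_def)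
  also have "\<dots> = emeasure lborel {max (-L/2) (-L/2-s) .. min (L/2) (L/2-s)}" by simp
  also have "\<dots> = ennreal (min (L/2) (L/2-s) - max (-L/2) (-L/2-s))"
    using assms by (intro emeasure_lborel_Icc) (auto simp: abs_le_iff max_def min_def)
  also have "min (L/2) (L/2-s) - max (-L/2) (-L/2-s) = L - \<bar>s\<bar>"
    by (auto simp: min_def max_def abs_if)
  finally show ?thesis .
qed

lemma overlap2:
  fixes L :: real and t :: "real \<times> real"
  assumes "\<bar>fst t\<bar> \<le> L" "\<bar>snd t\<bar> \<le> L"
  shows "(\<integral>\<^sup>+x. indicator ({-L/2..L/2} \<times> {-L/2..L/2}) x * indicator ({-L/2..L/2} \<times> {-L/2..L/2}) (x + t) \<partial>lborel)
     = ennreal ((L - \<bar>fst t\<bar>) * (L - \<bar>snd t\<bar>))"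
proof -
  obtain t1 t2 where t: "t = (t1, t2)" by (cases t)
  let ?I = "{-L/2..L/2::real}"
  have [measurable]: "?I \<times> ?I \<in> sets borel" by (auto intro!: borel_closed closed_Times)
  have m: "(\<lambda>x. indicator (?I \<times> ?I) x * indicator (?I \<times> ?I) (x + t) :: ennreal) \<in> borel_measurable borel"
    by measurable
  have "(\<integral>\<^sup>+x. indicator (?I \<times> ?I) x * indicator (?I \<times> ?I) (x + t) \<partial>lborel)
     = (\<integral>\<^sup>+x1. \<integral>\<^sup>+x2. (indicator ?I x1 * indicator ?I (x1 + t1)) * (indicator ?I x2 * indicator ?I (x2 + t2)) \<partial>lborel \<partial>lborel)"
    by (subst lborel_iter[OF m]) (auto simp: t indicator_def intro!: nn_integral_cong)
  also have "\<dots> = (\<integral>\<^sup>+x1. (indicator ?I x1 * indicator ?I (x1 + t1)) * \<integral>\<^sup>+x2. (indicator ?I x2 * indicator ?I (x2 + t2)) \<partial>lborel \<partial>lborel)"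
    by (intro nn_integral_cong nn_integral_cmult) auto
  also have "\<dots> = (\<integral>\<^sup>+x1. (indicator ?I x1 * indicator ?I (x1 + t1)) \<partial>lborel) * \<integral>\<^sup>+x2. (indicator ?I x2 * indicator ?I (x2 + t2)) \<partial>lborel"
    by (intro nn_integral_multc) auto
  also have "\<dots> = ennreal (L - \<bar>t1\<bar>) * ennreal (L - \<bar>t2\<bar>)"
    using assms overlap1[of t1 L] overlap1[of t2 L] by (simp add: t)
  finally show ?thesis using assms by (simp add: t ennreal_mult)
qed

lemma core:
  fixes r L :: real
  assumes r: "0 < r" and rL: "r \<le> L"
  defines "SS \<equiv> {-L/2..L/2} \<times> {-L/2..L/2}"
  shows "(\<integral>\<^sup>+x. \<integral>\<^sup>+y. indicator SS x * indicator SS y * indicator (cball x r) y \<partial>lborel \<partial>lborel)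
     = ennreal (pi*L^2*r^2 - 8*L*r^3/3 + r^4/2)"
proof -
  have [measurable]: "SS \<in> sets borel" unfolding SS_def by (auto intro!: borel_closed closed_Times)
  have [measurable]: "cball x r \<in> sets (borel :: (real \<times> real) measure)" for x r by simp
  have m1: "(\<lambda>y. indicator SS y * indicator (cball x r) y :: ennreal) \<in> borel_measurable borel" for x
    by measurable
  have m2: "(\<lambda>t. indicator SS (x + t) * indicator (cball 0 r) t :: ennreal) \<in> borel_measurable borel" for x
    by measurable
  have inner: "(\<integral>\<^sup>+y. indicator SS y * indicator (cball x r) y \<partial>lborel)
     = (\<integral>\<^sup>+t. indicator SS (x + t) * indicator (cball 0 r) t \<partial>lborel)" for x :: "real \<times> real"
  proof -
    have "(\<integral>\<^sup>+y. indicator SS y * indicator (cball x r) y \<partial>lborel)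
        = (\<integral>\<^sup>+y. indicator SS y * indicator (cball x r) y \<partial>(distr lborel borel ((+) x)))"
      by (simp add: lborel_distr_plus)
    also have "\<dots> = (\<integral>\<^sup>+t. indicator SS (x + t) * indicator (cball x r) (x + t) \<partial>lborel)"
      by (subst nn_integral_distr) (auto intro!: borel_measurable_times_ennreal borel_measurable_indicator)
    also have "\<dots> = (\<integral>\<^sup>+t. indicator SS (x + t) * indicator (cball 0 r) t \<partial>lborel)"
      by (intro nn_integral_cong) (auto simp: indicator_def dist_norm)
    finally show ?thesis .
  qed
  have "(\<integral>\<^sup>+x. \<integral>\<^sup>+y. indicator SS x * indicator SS y * indicator (cball x r) y \<partial>lborel \<partial>lborel)
      = (\<integral>\<^sup>+x. \<integral>\<^sup>+t. indicator SS x * indicator SS (x + t) * indicator (cball 0 r) t \<partial>lborel \<partial>lborel)"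
  proof (rule nn_integral_cong)
    fix x :: "real \<times> real"
    have "(\<integral>\<^sup>+y. indicator SS x * indicator SS y * indicator (cball x r) y \<partial>lborel)
        = indicator SS x * (\<integral>\<^sup>+y. indicator SS y * indicator (cball x r) y \<partial>lborel)"
      by (subst nn_integral_cmult[symmetric]) (auto simp: mult.assoc m1 m2)
    also have "\<dots> = indicator SS x * (\<integral>\<^sup>+t. indicator SS (x + t) * indicator (cball 0 r) t \<partial>lborel)"
      by (simp add: inner)
    also have "\<dots> = (\<integral>\<^sup>+t. indicator SS x * indicator SS (x + t) * indicator (cball 0 r) t \<partial>lborel)"
      by (subst nn_integral_cmult[symmetric]) (auto simp: mult.assoc m1 m2)
    finally show "(\<integral>\<^sup>+y. indicator SS x * indicator SS y * indicator (cball x r) y \<partial>lborel) =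
       (\<integral>\<^sup>+t. indicator SS x * indicator SS (x + t) * indicator (cball 0 r) t \<partial>lborel)" .
  qed
  also have "\<dots> = (\<integral>\<^sup>+t. \<integral>\<^sup>+x. indicator SS x * indicator SS (x + t) * indicator (cball 0 r) t \<partial>lborel \<partial>lborel)"
    by (rule lborel_pair.Fubini'[symmetric]) measurable
  also have "\<dots> = (\<integral>\<^sup>+t. indicator (cball 0 r) t * ennreal ((L - \<bar>fst t\<bar>)*(L - \<bar>snd t\<bar>)) \<partial>lborel)"
  proof (rule nn_integral_cong)
    fix t :: "real \<times> real"
    show "(\<integral>\<^sup>+x. indicator SS x * indicator SS (x + t) * indicator (cball 0 r) t \<partial>lborel)
        = indicator (cball 0 r) t * ennreal ((L - \<bar>fst t\<bar>)*(L - \<bar>snd t\<bar>))"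
    proof (cases "t \<in> cball 0 r")
      case True
      then have "norm t \<le> r" by simp
      then have "\<bar>fst t\<bar> \<le> L" "\<bar>snd t\<bar> \<le> L"
        using rL norm_fst_le[of "fst t" "snd t"] norm_snd_le[of "snd t" "fst t"] by auto
      then show ?thesis using True overlap2[of t L] by (simp add: SS_def)
    qed simp
  qed
  also have "\<dots> = ennreal (pi*L^2*r^2 - 8*L*r^3/3 + r^4/2)"
    by (rule psi[OF r rL])
  finally show ?thesis .
qed




definition Ed :: "real \<Rightarrow> real \<times> real \<Rightarrow> real \<times> real \<Rightarrow> real" where
  "Ed r x y = indicator (cball x r) y"

lemma Ed_sym: "Ed r x y = Ed r y x"
  by (simp add: Ed_def indicator_def dist_commute)

lemma Ed_01: "0 \<le> Ed r x y" "Ed r x y \<le> 1" "Ed r x y * Ed r x y = Ed r x y"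
  by (auto simp: Ed_def indicator_def)

lemma Ed_measurable[measurable]: "(\<lambda>(x,y). Ed r x y) \<in> borel_measurable (borel \<Otimes>\<^sub>M borel)"
proof -
  have "(\<lambda>(x,y). Ed r x y) = (\<lambda>z. indicator {z. dist (fst z) (snd z) \<le> r} z :: real)"
    by (auto simp: Ed_def indicator_def fun_eq_iff)
  moreover have "{z :: (real\<times>real)\<times>(real\<times>real). dist (fst z) (snd z) \<le> r} \<in> sets (borel \<Otimes>\<^sub>M borel)"
    unfolding borel_prod by (intro borel_closed closed_Collect_le continuous_intros)
  ultimately show ?thesis by simp
qed

lemma Ed_measurable'[measurable (raw)]:
  assumes "f \<in> measurable M borel" "g \<in> measurable M borel"
  shows "(\<lambda>x. Ed r (f x) (g x)) \<in> borel_measurable M"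
  using measurable_compose[OF measurable_Pair[OF assms] Ed_measurable] by simp

lemma ind_cball_meas[measurable (raw)]:
  fixes f g :: "'a \<Rightarrow> real \<times> real"
  assumes [measurable]: "f \<in> measurable M borel" "g \<in> measurable M borel"
  shows "(\<lambda>x. indicator (cball (f x) e) (g x) :: ennreal) \<in> borel_measurable M"
proof -
  have "(\<lambda>x. indicator (cball (f x) e) (g x) :: ennreal) = (\<lambda>x. ennreal (Ed e (f x) (g x)))"
    by (auto simp: Ed_def indicator_def fun_eq_iff)
  moreover have "(\<lambda>x. ennreal (Ed e (f x) (g x))) \<in> borel_measurable M" by measurable
  ultimately show ?thesis by simp
qed

lemma card_pairs: "2 * card {(u,v). u < v \<and> v < (m::nat)} = m * (m - 1)"
proof (induction m)
  case 0 then show ?case by simp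
next
  case (Suc m)
  have eq: "{(u,v). u < v \<and> v < Suc m} = {(u,v). u < v \<and> v < m} \<union> (\<lambda>u. (u,m)) ` {..<m}"
    by (auto simp: less_Suc_eq)
  have fin: "finite {(u,v). u < v \<and> v < m}"
    by (rule finite_subset[of _ "{..<m} \<times> {..<m}"]) auto
  have "card {(u,v). u < v \<and> v < Suc m} = card {(u,v). u < v \<and> v < m} + card ((\<lambda>u. (u,m)) ` {..<m})"
    unfolding eq by (rule card_Un_disjoint) (use fin in auto)
  also have "card ((\<lambda>u. (u,m)) ` {..<m}) = m" by (subst card_image) (auto simp: inj_on_def)
  finally show ?case using Suc.IH by (cases m) (auto simp: algebra_simps)
qed

lemma sum_ind_card: "finite A \<Longrightarrow> (\<Sum>e\<in>A. if Q e then (1::real) else 0) = real (card {e\<in>A. Q e})"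
  by (simp add: sum.If_cases Int_def)

lemma card_P: assumes n: "n > (0::nat)" and c: "2 * c = n * (n - 1)" shows "real c = real n * (real n - 1) / 2"
proof -
  have "real (2 * c) = real (n * (n - 1))" using c by simp
  then have "2 * real c = real n * real (n - 1)" by simp
  also have "real (n - 1) = real n - 1" using n by (simp add: of_nat_diff)
  finally have "2 * real c = real n * (real n - 1)" .
  then show ?thesis by simp
qed

lemma arith_mean:
  fixes L r :: real assumes L: "L > 0"
  shows "(L*L*(L*L-1)/2) * ((pi*L^2*r^2 - 8*L*r^3/3 + r^4/2)/(L*L)^2)
     = 1/2*(L*L-1)*pi*r^2*(1 - 8/(3*pi)*(r/L) + 1/(2*pi)*(r^2/(L*L)))"
  using L pi_gt_zero by (simp add: field_simps power2_eq_square power3_eq_cube power4_eq_xxxx)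

lemma arith_var:
  fixes L r V :: real assumes L: "L > 0" and r: "0 < r" "r \<le> L" and V: "V \<le> (pi*r^2/(L*L))^2 * (4*r/L)"
    and N: "L*L \<ge> 1"
  shows "(L*L*(L*L-1)/2) * ((pi*L^2*r^2 - 8*L*r^3/3 + r^4/2)/(L*L)^2 + 2*(L*L)*V)
     < 1/2*pi*(L*L)*r^2 + 4*pi^2*L*r^5"
proof -
  have t1: "(L*L*(L*L-1)/2) * ((pi*L^2*r^2 - 8*L*r^3/3 + r^4/2)/(L*L)^2) \<le> (L*L-1)/2 * (pi * r^2)"
  proof -
    have "r^4/2 \<le> 8*L*r^3/3"
    proof -
      have "r^4 = r * r^3" by (simp add: power_numeral_reduce)
      also have "\<dots> \<le> L * r^3" using r by (intro mult_right_mono) auto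
      finally have a: "r^4 \<le> L * r^3" .
      have "0 \<le> L * r^3" using r L by simp
      then show ?thesis using a by linarith
    qed
    then have "pi*L^2*r^2 - 8*L*r^3/3 + r^4/2 \<le> pi*L^2*r^2" by simp
    then have "(pi*L^2*r^2 - 8*L*r^3/3 + r^4/2)/(L*L)^2 \<le> pi*L^2*r^2/(L*L)^2"
      using L by (intro divide_right_mono) auto
    also have "pi*L^2*r^2/(L*L)^2 = pi * r^2 / (L*L)" using L by (simp add: power2_eq_square field_simps)
    finally have "(L*L*(L*L-1)/2) * ((pi*L^2*r^2 - 8*L*r^3/3 + r^4/2)/(L*L)^2) \<le> (L*L*(L*L-1)/2) * (pi * r^2 / (L*L))"
      using N by (intro mult_left_mono) auto
    also have "\<dots> = (L*L-1)/2 * (pi * r^2)" using L by (simp add: field_simps)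
    finally show ?thesis .
  qed
  have t2: "(L*L*(L*L-1)/2) * (2*(L*L)*V) \<le> 4*pi^2*L*r^5"
  proof -
    have "(L*L*(L*L-1)/2) * (2*(L*L)*V) \<le> (L*L*(L*L-1)/2) * (2*(L*L)*((pi*r^2/(L*L))^2 * (4*r/L)))"
      using N V L by (intro mult_left_mono) auto
    also have "\<dots> = (L*L-1) * (4*pi^2*r^5/L)" using L
      by (simp add: field_simps power2_eq_square power3_eq_cube power4_eq_xxxx power_numeral_reduce)
    also have "\<dots> \<le> (L*L) * (4*pi^2*r^5/L)" using r L by (intro mult_right_mono) auto
    also have "\<dots> = 4*pi^2*L*r^5" using L by (simp add: field_simps)
    finally show ?thesis .
  qed
  have t3: "(L*L-1)/2 * (pi * r^2) < 1/2*pi*(L*L)*r^2" using r by (simp add: field_simps)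
  have e: "(L*L*(L*L-1)/2) * (P + 2*(L*L)*V) = (L*L*(L*L-1)/2) * P + (L*L*(L*L-1)/2) * (2*(L*L)*V)" for P
    by (simp only: distrib_left)
  show ?thesis unfolding e using t1 t2 t3 by linarith
qed

locale rgg =
  fixes n :: nat and r :: real
  assumes n: "n > 0" and r: "0 < r" and rn: "r \<le> sqrt (real n)"
begin

abbreviation "L \<equiv> sqrt (real n)"
abbreviation "S \<equiv> square n"
abbreviation "mu \<equiv> uniform_measure lborel (square n)"

lemma L_pos: "L > 0" using n by simp
lemma L2: "L^2 = real n" by simp

lemma S_eq: "S = {-L/2..L/2} \<times> {-L/2..L/2}" by (simp add: square_def)

lemma S_sets[measurable]: "S \<in> sets borel"
  unfolding S_eq by (auto intro!: borel_closed closed_Times)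

lemma emS: "emeasure lborel S = ennreal (real n)"
proof -
  have "emeasure lborel S = emeasure (lborel \<Otimes>\<^sub>M lborel) ({-L/2..L/2} \<times> {-L/2..L/2})"
    by (simp add: S_eq lborel_prod)
  also have "\<dots> = emeasure lborel {-L/2..L/2} * emeasure lborel {-L/2..L/2}"
    by (rule lborel.emeasure_pair_measure_Times) auto
  also have "\<dots> = ennreal L * ennreal L" using L_pos by simp
  also have "\<dots> = ennreal (real n)" using L_pos by (simp add: ennreal_mult[symmetric])
  finally show ?thesis .
qed

lemma mu_prob: "prob_space mu"
  by (rule prob_space_uniform_measure) (use n in \<open>simp_all add: emS\<close>)

lemma sets_mu[measurable_cong, simp]: "sets mu = sets borel" by simp
lemma space_mu[simp]: "space mu = UNIV" by simp


interpretation mu: prob_space mu by (rule mu_prob)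

lemma mu_UNIV[simp]: "measure mu UNIV = 1" using mu.prob_space by simp

definition aa :: "real \<times> real \<Rightarrow> real" where "aa x = (\<integral>y. Ed r x y \<partial>mu)"
definition pp :: real where "pp = (\<integral>x. aa x \<partial>mu)"

lemma cball_sets[measurable]: "cball x e \<in> sets (borel :: (real \<times> real) measure)" by simp

lemma aa_eq: "aa x = measure mu (cball x r)"
  unfolding aa_def Ed_def by simp

lemma aa_01: "0 \<le> aa x" "aa x \<le> 1"
  unfolding aa_eq by auto

lemma aa_meas[measurable]: "aa \<in> borel_measurable borel"
proof -
  have "(\<lambda>x. \<integral>y. Ed r x y \<partial>mu) \<in> borel_measurable borel"
    by measurable
  then show ?thesis unfolding aa_def[abs_def] .
qed

lemma phi_nonneg: "0 \<le> pi*L^2*r^2 - 8*L*r^3/3 + r^4/2"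
proof -
  have "8*L*r^3/3 \<le> 8*L*(r^2*L)/3" using r rn L_pos
    by (intro divide_right_mono mult_left_mono) (auto simp: power3_eq_cube power2_eq_square)
  also have "\<dots> = (8/3) * real n * r^2" by (simp add: power2_eq_square)
  also have "\<dots> \<le> pi * L^2*r^2" using pi_gt3 n r
    by (simp add: power2_eq_square)
  moreover have "0 \<le> r^4" by simp
  ultimately show ?thesis by linarith
qed

lemma pp_val: "pp = (pi*L^2*r^2 - 8*L*r^3/3 + r^4/2) / (real n)^2"
proof -
  define SS where "SS = {-L/2..L/2} \<times> {-L/2..L/2}"
  have SS: "S = SS" by (simp add: S_eq SS_def)
  have [measurable]: "SS \<in> sets borel" using S_sets SS by simp
  have ea: "ennreal (aa x) = (\<integral>\<^sup>+y. indicator SS x * (indicator SS y * indicator (cball x r) y) \<partial>lborel) / ennreal (real n)"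
    if "x \<in> SS" for x
  proof -
    have "ennreal (aa x) = emeasure mu (cball x r)" by (simp add: aa_eq mu.emeasure_eq_measure)
    also have "\<dots> = (\<integral>\<^sup>+y. indicator (cball x r) y \<partial>mu)" by simp
    also have "\<dots> = (\<integral>\<^sup>+y. indicator (cball x r) y * indicator S y \<partial>lborel) / emeasure lborel S"
      by (rule nn_integral_uniform_measure) auto
    also have "\<dots> = (\<integral>\<^sup>+y. indicator SS x * (indicator SS y * indicator (cball x r) y) \<partial>lborel) / ennreal (real n)"
      using that emS by (simp add: SS mult.commute)
    finally show ?thesis .
  qed
  have fin: "(\<integral>\<^sup>+x. ennreal (aa x) \<partial>mu) \<le> 1"
  proof -
    have "(\<integral>\<^sup>+x. ennreal (aa x) \<partial>mu) \<le> (\<integral>\<^sup>+x. 1 \<partial>mu)"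
      using aa_01 by (intro nn_integral_mono) auto
    also have "(\<integral>\<^sup>+x. 1 \<partial>mu) = 1" using mu.emeasure_space_1 by simp
    finally show ?thesis .
  qed
  have fin': "(\<integral>\<^sup>+x. ennreal (aa x) \<partial>mu) < \<top>" by (rule le_less_trans[OF fin]) simp
  have "ennreal pp = (\<integral>\<^sup>+x. ennreal (aa x) \<partial>mu)"
    unfolding pp_def using aa_01 fin'
    by (subst integral_eq_nn_integral) (auto intro!: ennreal_enn2real simp: top_unique)
  also have "\<dots> = (\<integral>\<^sup>+x. ennreal (aa x) * indicator S x \<partial>lborel) / emeasure lborel S"
    by (rule nn_integral_uniform_measure) auto
  also have "(\<integral>\<^sup>+x. ennreal (aa x) * indicator S x \<partial>lborel)
     = (\<integral>\<^sup>+x. (\<integral>\<^sup>+y. indicator SS x * (indicator SS y * indicator (cball x r) y) \<partial>lborel) / ennreal (real n) \<partial>lborel)"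
  proof (rule nn_integral_cong)
    fix x :: "real \<times> real"
    show "ennreal (aa x) * indicator S x = (\<integral>\<^sup>+y. indicator SS x * (indicator SS y * indicator (cball x r) y) \<partial>lborel) / ennreal (real n)"
      by (cases "x \<in> SS") (auto simp: ea SS)
  qed
  also have "\<dots> = (\<integral>\<^sup>+x. \<integral>\<^sup>+y. indicator SS x * (indicator SS y * indicator (cball x r) y) \<partial>lborel \<partial>lborel) / ennreal (real n)"
    by (rule nn_integral_divide) measurable
  also have "(\<integral>\<^sup>+x. \<integral>\<^sup>+y. indicator SS x * (indicator SS y * indicator (cball x r) y) \<partial>lborel \<partial>lborel)
     = ennreal (pi*L^2*r^2 - 8*L*r^3/3 + r^4/2)"
    using core[OF r rn] unfolding SS_def by (simp add: mult.assoc)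
  finally have "ennreal pp = ennreal (pi*L^2*r^2 - 8*L*r^3/3 + r^4/2) / ennreal (real n) / ennreal (real n)"
    by (simp add: emS)
  also have "\<dots> = ennreal ((pi*L^2*r^2 - 8*L*r^3/3 + r^4/2) / (real n)^2)"
    using n phi_nonneg by (simp add: divide_ennreal power2_eq_square)
  finally show ?thesis
    using phi_nonneg n by (subst (asm) ennreal_inj) (auto simp: pp_def aa_01)
qed

definition cc :: real where "cc = pi * r^2 / real n"

lemma emcball: "emeasure lborel (cball (x::real\<times>real) r) = ennreal (pi * r^2)"
  using emeasure_cball[of r x] r by (simp add: unit_ball_vol_2 power2_eq_square)

lemma aa_em: "ennreal (aa x) = emeasure lborel (S \<inter> cball x r) / ennreal (real n)"
  by (simp add: aa_eq mu.emeasure_eq_measure[symmetric] emS)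

lemma aa_le: "aa x \<le> cc"
proof -
  have "ennreal (aa x) \<le> emeasure lborel (cball x r) / ennreal (real n)"
    unfolding aa_em by (intro divide_right_mono_ennreal emeasure_mono) auto
  also have "\<dots> = ennreal cc" using n by (simp add: emcball cc_def divide_ennreal)
  finally show ?thesis using aa_01 by (simp add: cc_def)
qed

lemma aa_inner: assumes "cball x r \<subseteq> S" shows "aa x = cc"
proof -
  have "ennreal (aa x) = emeasure lborel (cball x r) / ennreal (real n)"
    unfolding aa_em using assms by (simp add: Int_absorb1)
  also have "\<dots> = ennreal cc" using n by (simp add: emcball cc_def divide_ennreal)
  finally show ?thesis using aa_01 by (simp add: cc_def)
qed

definition BB :: "(real \<times> real) set" where "BB = {-L/2+r..L/2-r} \<times> {-L/2+r..L/2-r}"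

lemma BB_sets[measurable]: "BB \<in> sets borel"
  unfolding BB_def by (auto intro!: borel_closed closed_Times)

lemma BB_inner: assumes "x \<in> BB" shows "cball x r \<subseteq> S"
proof
  fix y assume "y \<in> cball x r"
  then have d: "dist x y \<le> r" by simp
  have "dist (fst x) (fst y) \<le> r" "dist (snd x) (snd y) \<le> r"
    using dist_fst_le[of x y] dist_snd_le[of x y] d by linarith+
  then show "y \<in> S" using assms unfolding S_eq BB_def
    by (cases x, cases y) (auto simp: dist_real_def abs_le_iff)
qed

lemma bad_prob: "measure mu (UNIV - BB) \<le> 4 * r / L"
proof (cases "2 * r \<le> L")
  case True
  have BS: "BB \<subseteq> S" unfolding BB_def S_eq using r by auto
  have "emeasure lborel BB = emeasure (lborel \<Otimes>\<^sub>M lborel) ({-L/2+r..L/2-r} \<times> {-L/2+r..L/2-r})"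
    by (simp add: BB_def lborel_prod)
  also have "\<dots> = emeasure lborel {-L/2+r..L/2-r} * emeasure lborel {-L/2+r..L/2-r}"
    by (rule lborel.emeasure_pair_measure_Times) auto
  also have "\<dots> = ennreal ((L - 2*r)^2)" using True
    by (simp add: ennreal_mult[symmetric] power2_eq_square)
  finally have eB: "emeasure lborel BB = ennreal ((L - 2*r)^2)" .
  have "ennreal (measure mu BB) = emeasure lborel (S \<inter> BB) / ennreal (real n)"
    by (simp add: mu.emeasure_eq_measure[symmetric] emS)
  also have "\<dots> = ennreal ((L - 2*r)^2 / real n)"
    using BS n eB by (simp add: Int_absorb1 divide_ennreal)
  finally have mB: "measure mu BB = (L - 2*r)^2 / real n" by (simp add: ennreal_inj)
  have "measure mu (UNIV - BB) = 1 - (L - 2*r)^2 / real n"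
    using mu.prob_compl[of BB] mB by simp
  also have "\<dots> = (4*r*L - 4*r^2) / real n" using n by (simp add: field_simps power2_eq_square)
  also have "\<dots> \<le> 4*r*L / real n" using r L_pos by (intro divide_right_mono) auto
  also have "\<dots> = 4 * r / L"
  proof -
    have gen: "4*r*z/(z*z) = 4*r/z" if "z > 0" for z :: real using that by simp
    show ?thesis using gen[OF L_pos] by simp
  qed
  finally show ?thesis .
next
  case False
  then have "L \<le> 4 * r" using r by linarith
  then have "1 \<le> 4 * r / L" using L_pos by (simp add: field_simps)
  then show ?thesis using mu.prob_le_1[of "UNIV - BB"] by linarith
qed


lemma intb: fixes f :: "real \<times> real \<Rightarrow> real" and B :: real assumes "f \<in> borel_measurable borel" "\<And>x. \<bar>f x\<bar> \<le> B" shows "integrable mu f"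
  by (rule mu.integrable_const_bound[of _ B]) (use assms in auto)

definition VV :: real where "VV = (\<integral>x. (aa x - pp)^2 \<partial>mu)"

lemma cc_nonneg: "0 \<le> cc" unfolding cc_def by simp

lemma VV_nonneg: "0 \<le> VV" unfolding VV_def by simp

lemma VV_le: "VV \<le> cc^2 * (4 * r / L)"
proof -
  have ia: "integrable mu aa" using aa_01 by (intro intb[of _ 1]) auto
  have sqb: "\<bar>(aa x - q)^2\<bar> \<le> (1 + \<bar>q\<bar>)^2" for x q
  proof -
    have "\<bar>aa x - q\<bar> \<le> 1 + \<bar>q\<bar>" using aa_01[of x] abs_ge_self[of q] abs_ge_minus_self[of q] by (simp add: abs_le_iff)
    then have "\<bar>aa x - q\<bar>^2 \<le> (1 + \<bar>q\<bar>)^2" by (intro power_mono) auto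
    then show ?thesis by simp
  qed
  have i1: "integrable mu (\<lambda>x. (aa x - pp)^2)"
    by (intro intb[of _ "(1 + \<bar>pp\<bar>)^2"] sqb) auto
  have i2: "integrable mu (\<lambda>x. (aa x - cc)^2)"
    by (intro intb[of _ "(1 + \<bar>cc\<bar>)^2"] sqb) auto
  have pa: "(\<integral>x. aa x \<partial>mu) = pp" by (simp add: pp_def)
  have "(\<integral>x. (aa x - cc)^2 \<partial>mu) - VV = (\<integral>x. (aa x - cc)^2 - (aa x - pp)^2 \<partial>mu)"
    unfolding VV_def using i1 i2 by simp
  also have "\<dots> = (\<integral>x. 2 * (pp - cc) * aa x + (cc^2 - pp^2) \<partial>mu)"
    by (intro Bochner_Integration.integral_cong) (auto simp: power2_eq_square algebra_simps)
  also have "\<dots> = 2 * (pp - cc) * pp + (cc^2 - pp^2)"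
    using ia pa mu.prob_space by simp
  also have "\<dots> = (pp - cc)^2" by (simp add: power2_eq_square algebra_simps)
  finally have "VV \<le> (\<integral>x. (aa x - cc)^2 \<partial>mu)" by (smt (verit) zero_le_power2)
  also have "\<dots> \<le> (\<integral>x. cc^2 * indicator (UNIV - BB) x \<partial>mu)"
  proof (intro integral_mono i2)
    show "integrable mu (\<lambda>x. cc^2 * indicator (UNIV - BB) x)"
      by (intro intb[of _ "cc^2"]) (auto simp: indicator_def)
    fix x
    show "(aa x - cc)^2 \<le> cc^2 * indicator (UNIV - BB) x"
    proof (cases "x \<in> BB")
      case True then show ?thesis using aa_inner[OF BB_inner[OF True]] by simp
    next
      case False
      have "(aa x - cc)^2 = (cc - aa x)^2" by (simp add: power2_commute)
      also have "\<dots> \<le> cc^2" using aa_01[of x] aa_le[of x] by (intro power_mono) auto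
      finally show ?thesis using False by simp
    qed
  qed
  also have "\<dots> = cc^2 * measure mu (UNIV - BB)" by simp
  also have "\<dots> \<le> cc^2 * (4 * r / L)" using bad_prob by (intro mult_left_mono) auto
  finally show ?thesis .
qed


abbreviation PI :: "nat set \<Rightarrow> (nat \<Rightarrow> real \<times> real) measure" where "PI K \<equiv> PiM K (\<lambda>_. mu)"

interpretation PS: product_sigma_finite "\<lambda>_::nat. mu"
  by unfold_locales

lemma PI_prob: "prob_space (PI K)"
  by (rule prob_space_PiM) (rule mu_prob)

lemma int_out:
  fixes g :: "(nat \<Rightarrow> real \<times> real) \<Rightarrow> real" and B :: real
  assumes K: "finite K" "i \<in> K" and g: "g \<in> borel_measurable (PI K)" and B: "\<And>X. \<bar>g X\<bar> \<le> B"
  shows "(\<integral>X. g X \<partial>PI K) = (\<integral>X. (\<integral>y. g (X(i:=y)) \<partial>mu) \<partial>PI (K - {i}))"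
proof -
  interpret P: prob_space "PI K" by (rule PI_prob)
  have KK: "insert i (K - {i}) = K" using K by auto
  have "integrable (PI K) g" by (rule P.integrable_const_bound[of _ B]) (use g B in auto)
  then have "integrable (PI (insert i (K - {i}))) g" by (simp only: KK)
  from PS.product_integral_insert[OF _ _ this] K show ?thesis by (simp only: KK) simp
qed

lemma int_const:
  "(\<integral>X. c \<partial>PI K) = (c::real)"
proof -
  interpret P: prob_space "PI K" by (rule PI_prob)
  show ?thesis by (simp add: P.prob_space)
qed

lemma int_single:
  fixes phi :: "real \<times> real \<Rightarrow> real" and B :: real
  assumes K: "finite K" "i \<in> K" and [measurable]: "phi \<in> borel_measurable borel" and B: "\<And>x. \<bar>phi x\<bar> \<le> B"
  shows "(\<integral>X. phi (X i) \<partial>PI K) = (\<integral>x. phi x \<partial>mu)"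
proof -
  have "(\<integral>X. phi (X i) \<partial>PI K) = (\<integral>X. (\<integral>y. phi ((X(i:=y)) i) \<partial>mu) \<partial>PI (K - {i}))"
    by (rule int_out[OF K _ B]) (use K in measurable)
  also have "\<dots> = (\<integral>X. (\<integral>y. phi y \<partial>mu) \<partial>PI (K - {i}))" by simp
  also have "\<dots> = (\<integral>x. phi x \<partial>mu)" by (rule int_const)
  finally show ?thesis .
qed


lemma pp_01: "0 \<le> pp" "pp \<le> 1"
proof -
  have "(\<integral>x. aa x \<partial>mu) \<le> (\<integral>x. 1 \<partial>mu)"
    using aa_01 by (intro integral_mono intb[of _ 1]) auto
  then show "pp \<le> 1" by (simp add: pp_def mu.prob_space)
  show "0 \<le> pp" unfolding pp_def using aa_01 by simp
qed

lemma Edpp_bound: "\<bar>Ed r x y - pp\<bar> \<le> 1"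
  using Ed_01[of r x y] pp_01 by (auto simp: abs_le_iff)

lemma aapp_bound: "\<bar>aa x - pp\<bar> \<le> 1"
  using aa_01[of x] pp_01 by (auto simp: abs_le_iff)

lemma int_Ed_c: "(\<integral>y. (Ed r x y - pp) * c \<partial>mu) = (aa x - pp) * c"
proof -
  have i: "integrable mu (\<lambda>y. Ed r x y)" using Ed_01 by (intro intb[of _ 1]) auto
  have "(\<integral>y. (Ed r x y - pp) * c \<partial>mu) = (\<integral>y. (Ed r x y - pp) \<partial>mu) * c" by simp
  also have "(\<integral>y. (Ed r x y - pp) \<partial>mu) = aa x - pp"
    using i by (simp add: aa_def mu.prob_space)
  finally show ?thesis .
qed

lemma int_edge:
  assumes K: "finite K" "u \<in> K" "v \<in> K" "u \<noteq> v"
  shows "(\<integral>X. Ed r (X u) (X v) \<partial>PI K) = pp"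
proof -
  have "(\<integral>X. Ed r (X u) (X v) \<partial>PI K) = (\<integral>X. (\<integral>y. Ed r ((X(v:=y)) u) ((X(v:=y)) v) \<partial>mu) \<partial>PI (K - {v}))"
    by (rule int_out[of K v _ 1]) (use K Ed_01 in measurable, use Ed_01 in auto)
  also have "\<dots> = (\<integral>X. aa (X u) \<partial>PI (K - {v}))" using K by (simp add: aa_def)
  also have "\<dots> = (\<integral>x. aa x \<partial>mu)"
    by (rule int_single[of _ _ _ 1]) (use K aa_01 in auto)
  finally show ?thesis by (simp add: pp_def)
qed


lemma cov_far:
  assumes K: "finite K" "u \<in> K" "v \<in> K" "w \<in> K" "z \<in> K" and d: "u \<noteq> v" "w \<noteq> z" "z \<noteq> u" "z \<noteq> v"
  shows "(\<integral>X. (Ed r (X u) (X v) - pp) * (Ed r (X w) (X z) - pp) \<partial>PI K) = (if w = u \<or> w = v then VV else 0)"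
proof -
  have bnd: "\<bar>(Ed r a b - pp) * (Ed r c e - pp)\<bar> \<le> 1" for a b c e
    using Edpp_bound[of a b] Edpp_bound[of c e] by (simp add: abs_mult mult_le_one)
  have bnd2: "\<bar>(Ed r a b - pp) * (aa c - pp)\<bar> \<le> 1" for a b c
    using Edpp_bound[of a b] aapp_bound[of c] by (simp add: abs_mult mult_le_one)
  let ?K = "K - {z}"
  have "(\<integral>X. (Ed r (X u) (X v) - pp) * (Ed r (X w) (X z) - pp) \<partial>PI K)
     = (\<integral>X. (\<integral>y. (Ed r ((X(z:=y)) u) ((X(z:=y)) v) - pp) * (Ed r ((X(z:=y)) w) ((X(z:=y)) z) - pp) \<partial>mu) \<partial>PI ?K)"
    by (rule int_out[of K z _ 1]) (use K in measurable, rule bnd)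
  also have "\<dots> = (\<integral>X. (Ed r (X u) (X v) - pp) * (aa (X w) - pp) \<partial>PI ?K)"
  proof (rule Bochner_Integration.integral_cong[OF refl])
    fix X :: "nat \<Rightarrow> real \<times> real"
    have "(\<integral>y. (Ed r ((X(z:=y)) u) ((X(z:=y)) v) - pp) * (Ed r ((X(z:=y)) w) ((X(z:=y)) z) - pp) \<partial>mu)
       = (\<integral>y. (Ed r (X w) y - pp) * (Ed r (X u) (X v) - pp) \<partial>mu)"
      using d by (simp add: mult.commute)
    also have "\<dots> = (aa (X w) - pp) * (Ed r (X u) (X v) - pp)" by (rule int_Ed_c)
    finally show "(\<integral>y. (Ed r ((X(z:=y)) u) ((X(z:=y)) v) - pp) * (Ed r ((X(z:=y)) w) ((X(z:=y)) z) - pp) \<partial>mu)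
       = (Ed r (X u) (X v) - pp) * (aa (X w) - pp)" by (simp add: mult.commute)
  qed
  also have "\<dots> = (if w = u \<or> w = v then VV else 0)"
  proof (cases "w = u \<or> w = v")
    case False
    have "(\<integral>X. (Ed r (X u) (X v) - pp) * (aa (X w) - pp) \<partial>PI ?K)
       = (\<integral>X. (\<integral>y. (Ed r ((X(w:=y)) u) ((X(w:=y)) v) - pp) * (aa ((X(w:=y)) w) - pp) \<partial>mu) \<partial>PI (?K - {w}))"
      by (rule int_out[of ?K w _ 1]) (use K d in measurable, use K d in auto, rule bnd2)
    also have "\<dots> = (\<integral>X. (Ed r (X u) (X v) - pp) * (\<integral>y. aa y - pp \<partial>mu) \<partial>PI (?K - {w}))"
    proof (rule Bochner_Integration.integral_cong[OF refl])
      fix X :: "nat \<Rightarrow> real \<times> real"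
      have ia: "integrable mu aa" using aa_01 by (intro intb[of _ 1]) auto
      show "(\<integral>y. (Ed r ((X(w:=y)) u) ((X(w:=y)) v) - pp) * (aa ((X(w:=y)) w) - pp) \<partial>mu)
         = (Ed r (X u) (X v) - pp) * (\<integral>y. aa y - pp \<partial>mu)"
        using False ia by simp
    qed
    also have "(\<integral>y. aa y - pp \<partial>mu) = 0"
    proof -
      have ia: "integrable mu aa" using aa_01 by (intro intb[of _ 1]) auto
      then show ?thesis by (simp add: pp_def)
    qed
    finally show ?thesis using False by simp
  next
    case True
    define m where "m = (if w = u then v else u)"
    have m: "m \<in> ?K" "m \<noteq> w" using K d True by (auto simp: m_def)
    have sw: "Ed r (X u) (X v) = Ed r (X w) (X m)" for X :: "nat \<Rightarrow> real \<times> real"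
      using True by (auto simp: m_def Ed_sym)
    have "(\<integral>X. (Ed r (X u) (X v) - pp) * (aa (X w) - pp) \<partial>PI ?K)
       = (\<integral>X. (Ed r (X w) (X m) - pp) * (aa (X w) - pp) \<partial>PI ?K)" by (simp add: sw)
    also have "\<dots> = (\<integral>X. (\<integral>y. (Ed r ((X(m:=y)) w) ((X(m:=y)) m) - pp) * (aa ((X(m:=y)) w) - pp) \<partial>mu) \<partial>PI (?K - {m}))"
      by (rule int_out[of ?K m _ 1]) (use K d m True in measurable, use K d m in auto, rule bnd2)
    also have "\<dots> = (\<integral>X. (aa (X w) - pp)^2 \<partial>PI (?K - {m}))"
    proof (rule Bochner_Integration.integral_cong[OF refl])
      fix X :: "nat \<Rightarrow> real \<times> real"
      show "(\<integral>y. (Ed r ((X(m:=y)) w) ((X(m:=y)) m) - pp) * (aa ((X(m:=y)) w) - pp) \<partial>mu)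
         = (aa (X w) - pp)^2"
        using m int_Ed_c[of "X w" "aa (X w) - pp"] by (simp add: power2_eq_square)
    qed
    also have "\<dots> = (\<integral>x. (aa x - pp)^2 \<partial>mu)"
    proof (rule int_single[of _ _ _ 1])
      show "\<bar>(aa x - pp)^2\<bar> \<le> 1" for x using aapp_bound[of x]
        by (simp add: abs_square_le_1)
    qed (use K d m True in auto)
    finally show ?thesis using True by (simp add: VV_def)
  qed
  finally show ?thesis .
qed


definition Pset :: "(nat \<times> nat) set" where "Pset = {(u,v). u < v \<and> v < n}"

lemma Pset_finite: "finite Pset"
  by (rule finite_subset[of _ "{..<n} \<times> {..<n}"]) (auto simp: Pset_def)

definition meets :: "nat \<times> nat \<Rightarrow> nat \<times> nat \<Rightarrow> bool" where
  "meets e e' \<longleftrightarrow> fst e = fst e' \<or> fst e = snd e' \<or> snd e = fst e' \<or> snd e = snd e'"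

abbreviation Y :: "nat \<times> nat \<Rightarrow> (nat \<Rightarrow> real \<times> real) \<Rightarrow> real" where
  "Y e X \<equiv> Ed r (X (fst e)) (X (snd e)) - pp"

lemma Y_meas[measurable]: "e \<in> Pset \<Longrightarrow> Y e \<in> borel_measurable (PI {..<n})"
  by (cases e) (auto simp: Pset_def)

lemma cov_pair:
  assumes e: "e \<in> Pset" and e': "e' \<in> Pset"
  shows "(\<integral>X. Y e X * Y e' X \<partial>PI {..<n}) \<le> (if e = e' then pp else 0) + (if meets e e' then VV else 0)"
proof -
  obtain u v where uv: "e = (u,v)" by (cases e)
  obtain w z where wz: "e' = (w,z)" by (cases e')
  have K: "finite {..<n}" "u \<in> {..<n}" "v \<in> {..<n}" "w \<in> {..<n}" "z \<in> {..<n}" "u < v" "w < z"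
    using e e' uv wz by (auto simp: Pset_def)
  have VV0: "0 \<le> VV" by (rule VV_nonneg)
  show ?thesis
  proof (cases "e = e'")
    case True
    interpret P: prob_space "PI {..<n}" by (rule PI_prob)
    have ie: "integrable (PI {..<n}) (\<lambda>X. Ed r (X u) (X v))"
      by (rule P.integrable_const_bound[of _ 1]) (use K Ed_01 in auto)
    have "(\<integral>X. Y e X * Y e' X \<partial>PI {..<n}) = (\<integral>X. Ed r (X u) (X v) * (1 - 2*pp) + pp^2 \<partial>PI {..<n})"
    proof (intro Bochner_Integration.integral_cong refl)
      fix X :: "nat \<Rightarrow> real \<times> real"
      have "Ed r (X u) (X v) = 0 \<or> Ed r (X u) (X v) = 1" by (simp add: Ed_def indicator_def)
      then show "Y e X * Y e' X = Ed r (X u) (X v) * (1 - 2*pp) + pp^2"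
        unfolding True[symmetric] uv by (elim disjE) (simp_all add: power2_eq_square algebra_simps)
    qed
    also have "\<dots> = pp * (1 - 2*pp) + pp^2"
      using ie int_edge[of "{..<n}" u v] K by (simp add: P.prob_space)
    also have "\<dots> \<le> pp" by (simp add: power2_eq_square algebra_simps)
    finally show ?thesis using True VV0 by simp
  next
    case False
    show ?thesis
    proof (cases "z = u \<or> z = v")
      case False2: False
      have "(\<integral>X. Y e X * Y e' X \<partial>PI {..<n}) = (\<integral>X. (Ed r (X u) (X v) - pp) * (Ed r (X w) (X z) - pp) \<partial>PI {..<n})"
        by (simp add: uv wz)
      also have "\<dots> = (if w = u \<or> w = v then VV else 0)"
        by (rule cov_far) (use K False2 in auto)
      finally have eqn: "(\<integral>X. Y e X * Y e' X \<partial>PI {..<n}) = (if w = u \<or> w = v then VV else 0)" .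
      have m: "w = u \<or> w = v \<Longrightarrow> meets e e'" by (auto simp: meets_def uv wz)
      show ?thesis unfolding eqn using m False VV0 by auto
    next
      case True
      then have wn: "w \<noteq> u" "w \<noteq> v" using False K uv wz by auto
      have "(\<integral>X. Y e X * Y e' X \<partial>PI {..<n}) = (\<integral>X. (Ed r (X u) (X v) - pp) * (Ed r (X z) (X w) - pp) \<partial>PI {..<n})"
        by (simp add: uv wz Ed_sym)
      also have "\<dots> = (if z = u \<or> z = v then VV else 0)"
        by (rule cov_far) (use K wn True in auto)
      also have "\<dots> = VV" using True by simp
      finally have eqn: "(\<integral>X. Y e X * Y e' X \<partial>PI {..<n}) = VV" .
      have m: "meets e e'" using True by (auto simp: meets_def uv wz)
      show ?thesis unfolding eqn using m False VV0 by auto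
    qed
  qed
qed

lemma meets_card: assumes "e \<in> Pset" shows "card {e' \<in> Pset. meets e e'} \<le> 2 * n"
proof -
  obtain u v where uv: "e = (u,v)" by (cases e)
  define f where "f a x = (if x < a then (x,a) else (a,x))" for a x :: nat
  have "{e' \<in> Pset. meets e e'} \<subseteq> f u ` {..<n} \<union> f v ` {..<n}"
  proof
    fix e' assume a: "e' \<in> {e' \<in> Pset. meets e e'}"
    obtain w z where wz: "e' = (w,z)" by (cases e')
    have wzn: "w < z" "z < n" using a wz by (auto simp: Pset_def)
    have "u = w \<or> u = z \<or> v = w \<or> v = z" using a by (auto simp: meets_def uv wz)
    then show "e' \<in> f u ` {..<n} \<union> f v ` {..<n}"
    proof (elim disjE)
      assume "u = w" then have "e' = f u z" using wzn by (auto simp: f_def wz)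
      then show ?thesis using wzn by auto
    next
      assume "u = z" then have "e' = f u w" using wzn by (auto simp: f_def wz)
      then show ?thesis using wzn by auto
    next
      assume "v = w" then have "e' = f v z" using wzn by (auto simp: f_def wz)
      then show ?thesis using wzn by auto
    next
      assume "v = z" then have "e' = f v w" using wzn by (auto simp: f_def wz)
      then show ?thesis using wzn by auto
    qed
  qed
  then have "card {e' \<in> Pset. meets e e'} \<le> card (f u ` {..<n} \<union> f v ` {..<n})"
    by (intro card_mono) auto
  also have "\<dots> \<le> card (f u ` {..<n}) + card (f v ` {..<n})" by (rule card_Un_le)
  also have "\<dots> \<le> n + n" using card_image_le[of "{..<n}" "f u"] card_image_le[of "{..<n}" "f v"] by simp
  finally show ?thesis by simp
qed


lemma card_Pset: "real (card Pset) = real n * (real n - 1) / 2"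
proof -
  have "2 * card Pset = n * (n - 1)" using card_pairs[of n] by (simp add: Pset_def)
  then show ?thesis using card_P n by blast
qed

lemma num_edges_sum: "num_edges n r X = (\<Sum>e\<in>Pset. Ed r (X (fst e)) (X (snd e)))"
proof -
  have "(\<Sum>e\<in>Pset. Ed r (X (fst e)) (X (snd e))) = (\<Sum>e\<in>Pset. if dist (X (fst e)) (X (snd e)) \<le> r then 1 else 0)"
    by (intro sum.cong) (auto simp: Ed_def indicator_def)
  also have "\<dots> = real (card {e\<in>Pset. dist (X (fst e)) (X (snd e)) \<le> r})"
    by (rule sum_ind_card[OF Pset_finite])
  also have "{e\<in>Pset. dist (X (fst e)) (X (snd e)) \<le> r} = {(u, v). u < v \<and> v < n \<and> dist (X u) (X v) \<le> r}"
    by (auto simp: Pset_def)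
  finally show ?thesis by (simp add: num_edges_def)
qed

lemma rgg_PI: "rgg_space n = PI {..<n}" by (simp add: rgg_space_def)

lemma mean: "(\<integral>X. num_edges n r X \<partial>rgg_space n) = real (card Pset) * pp"
proof -
  interpret P: prob_space "PI {..<n}" by (rule PI_prob)
  have "(\<integral>X. num_edges n r X \<partial>rgg_space n) = (\<integral>X. (\<Sum>e\<in>Pset. Ed r (X (fst e)) (X (snd e))) \<partial>PI {..<n})"
    by (simp add: rgg_PI num_edges_sum)
  also have "\<dots> = (\<Sum>e\<in>Pset. (\<integral>X. Ed r (X (fst e)) (X (snd e)) \<partial>PI {..<n}))"
  proof (rule Bochner_Integration.integral_sum)
    fix e assume e: "e \<in> Pset"
    show "integrable (PI {..<n}) (\<lambda>X. Ed r (X (fst e)) (X (snd e)))"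
      by (rule P.integrable_const_bound[of _ 1]) (use e Ed_01 in \<open>auto simp: Pset_def\<close>)
  qed
  also have "\<dots> = (\<Sum>e\<in>Pset. pp)"
    by (intro sum.cong refl int_edge) (auto simp: Pset_def)
  finally show ?thesis by simp
qed


lemma var_bound:
  "(\<integral>X. (num_edges n r X - (\<integral>Y. num_edges n r Y \<partial>rgg_space n))^2 \<partial>rgg_space n)
     \<le> real (card Pset) * (pp + 2 * real n * VV)"
proof -
  interpret P: prob_space "PI {..<n}" by (rule PI_prob)
  have bnd: "\<bar>Y e X * Y e' X\<bar> \<le> 1" for e e' X
    using Edpp_bound[of "X (fst e)" "X (snd e)"] Edpp_bound[of "X (fst e')" "X (snd e')"]
    by (simp add: abs_mult mult_le_one)
  have iYY: "integrable (PI {..<n}) (\<lambda>X. Y e X * Y e' X)" if "e \<in> Pset" "e' \<in> Pset" for e e'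
    by (rule P.integrable_const_bound[of _ 1]) (use that bnd in auto)
  have pt: "(num_edges n r X - real (card Pset) * pp)^2 = (\<Sum>e\<in>Pset. \<Sum>e'\<in>Pset. Y e X * Y e' X)" for X
  proof -
    have "num_edges n r X - real (card Pset) * pp = (\<Sum>e\<in>Pset. Y e X)"
      by (simp add: num_edges_sum sum_subtractf)
    then show ?thesis by (simp add: power2_eq_square sum_product)
  qed
  have "(\<integral>X. (num_edges n r X - (\<integral>Y. num_edges n r Y \<partial>rgg_space n))^2 \<partial>rgg_space n)
      = (\<integral>X. (\<Sum>e\<in>Pset. \<Sum>e'\<in>Pset. Y e X * Y e' X) \<partial>PI {..<n})"
    unfolding mean by (simp add: pt rgg_PI)
  also have "\<dots> = (\<Sum>e\<in>Pset. (\<integral>X. (\<Sum>e'\<in>Pset. Y e X * Y e' X) \<partial>PI {..<n}))"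
    by (rule Bochner_Integration.integral_sum) (rule Bochner_Integration.integrable_sum, rule iYY, auto)
  also have "\<dots> = (\<Sum>e\<in>Pset. \<Sum>e'\<in>Pset. (\<integral>X. Y e X * Y e' X \<partial>PI {..<n}))"
    by (intro sum.cong refl Bochner_Integration.integral_sum iYY)
  also have "\<dots> \<le> (\<Sum>e\<in>Pset. \<Sum>e'\<in>Pset. ((if e = e' then pp else 0) + (if meets e e' then VV else 0)))"
    by (intro sum_mono cov_pair)
  also have "\<dots> \<le> (\<Sum>e\<in>Pset. (pp + 2 * real n * VV))"
  proof (rule sum_mono)
    fix e assume e: "e \<in> Pset"
    have "(\<Sum>e'\<in>Pset. ((if e = e' then pp else 0) + (if meets e e' then VV else 0)))
        = (\<Sum>e'\<in>Pset. (if e = e' then pp else 0)) + VV * (\<Sum>e'\<in>Pset. (if meets e e' then 1 else 0))"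
    proof -
      have a: "(if meets e e' then VV else 0) = VV * (if meets e e' then 1 else 0)" for e' by simp
      show ?thesis by (simp only: a sum.distrib sum_distrib_left)
    qed
    also have "(\<Sum>e'\<in>Pset. (if e = e' then pp else 0)) = pp"
      using e Pset_finite by simp
    also have "(\<Sum>e'\<in>Pset. (if meets e e' then (1::real) else 0)) = real (card {e' \<in> Pset. meets e e'})"
      by (rule sum_ind_card[OF Pset_finite])
    also have "VV * real (card {e' \<in> Pset. meets e e'}) \<le> VV * (2 * real n)"
      using meets_card[OF e] VV_nonneg by (intro mult_left_mono) auto
    finally show "(\<Sum>e'\<in>Pset. ((if e = e' then pp else 0) + (if meets e e' then VV else 0))) \<le> pp + 2 * real n * VV"
      by (simp add: algebra_simps)
  qed
  also have "\<dots> = real (card Pset) * (pp + 2 * real n * VV)" by simp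
  finally show ?thesis .
qed


lemma main:
  "((\<integral>X. num_edges n r X \<partial>rgg_space n)
           = 1/2 * (real n - 1) * pi * r^2
             * (1 - 8 / (3 * pi) * (r / sqrt (real n)) + 1 / (2 * pi) * (r^2 / real n)))
         \<and> ((\<integral>X. (num_edges n r X - (\<integral>Y. num_edges n r Y \<partial>rgg_space n))^2 \<partial>rgg_space n)
           < 1/2 * pi * real n * r^2 + 4 * pi^2 * sqrt (real n) * r^5)"
proof
  have LL: "L * L = real n" by simp
  have cP: "real (card Pset) = L*L*(L*L-1)/2" using card_Pset by simp
  have ppL: "pp = (pi*L^2*r^2 - 8*L*r^3/3 + r^4/2)/(L*L)^2" using pp_val by simp
  show "(\<integral>X. num_edges n r X \<partial>rgg_space n)
           = 1/2 * (real n - 1) * pi * r^2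
             * (1 - 8 / (3 * pi) * (r / sqrt (real n)) + 1 / (2 * pi) * (r^2 / real n))"
    using arith_mean[OF L_pos, of r] unfolding mean cP ppL by simp
  have V: "VV \<le> (pi*r^2/(L*L))^2 * (4*r/L)" using VV_le by (simp add: cc_def)
  have N: "L * L \<ge> 1" using n by simp
  have "(\<integral>X. (num_edges n r X - (\<integral>Y. num_edges n r Y \<partial>rgg_space n))^2 \<partial>rgg_space n)
      \<le> real (card Pset) * (pp + 2 * real n * VV)" by (rule var_bound)
  also have "\<dots> < 1/2*pi*(L*L)*r^2 + 4*pi^2*L*r^5"
    using arith_var[OF L_pos r rn V N] unfolding cP ppL by simp
  finally show "(\<integral>X. (num_edges n r X - (\<integral>Y. num_edges n r Y \<partial>rgg_space n))^2 \<partial>rgg_space n)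
           < 1/2 * pi * real n * r^2 + 4 * pi^2 * sqrt (real n) * r^5" by simp
qed

end

theorem proposition3p1:
  fixes n :: nat and r :: real
  assumes "n > 0" and "0 < r" and "r \<le> sqrt (real n)"
  shows "((\<integral>X. num_edges n r X \<partial>rgg_space n)
           = 1/2 * (real n - 1) * pi * r^2
             * (1 - 8 / (3 * pi) * (r / sqrt (real n)) + 1 / (2 * pi) * (r^2 / real n)))
         \<and> ((\<integral>X. (num_edges n r X - (\<integral>Y. num_edges n r Y \<partial>rgg_space n))^2 \<partial>rgg_space n)
           < 1/2 * pi * real n * r^2 + 4 * pi^2 * sqrt (real n) * r^5)"
  using rgg.main[OF rgg.intro[OF assms]] .


end
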